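(* Let $X\in\mathbb{R}^{n\times D}$ (possibly already augmented with a column of ones for the bias) with $X^\top X$ invertible, and $y\in\mathbb{R}^n$. Let $\mathcal{Q}$ be a partition of $\{1,\dots,D\}$ and $\mathcal{P}$ a partition of $\{1,\dots,n\}$ such that $(\mathcal{P},\mathcal{Q})$ is equitable on $X$ and $(X^\top y)_{j_1}=(X^\top y)_{j_2}$ whenever $j_1,j_2$ share a color of $\mathcal{Q}$. Set $X'=\Pi_{\mathcal{P}}^{\mathrm{Scaled}}X\Pi_{\mathcal{Q}}$, $y'=\Pi_{\mathcal{P}}^{\mathrm{Scaled}}y$, $W'=\Pi_{\mathcal{P}}^\top\Pi_{\mathcal{P}}$ (the diagonal matrix with $W'_{SS}=|S|$), and assume $(X')^\top W'X'$ is invertible. Let $w'=((X')^\top W'X')^{-1}(X')^\top W'y'$. Then $\Pi_{\mathcal{Q}}w'=(X^\top X)^{-1}X^\top y$.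
   Context: A partition of a finite set is a set of nonempty pairwise disjoint subsets ("colors") covering it. A pair $(\mathcal{P},\mathcal{Q})$ of partitions of the row and column indices of $A$ is equitable on $A$ if for every $S\in\mathcal{P}$, $T\in\mathcal{Q}$: $\sum_{j\in T}A_{ij}$ is the same for all $i\in S$ and $\sum_{i\in S}A_{ij}$ is the same for all $j\in T$. For a partition $\mathcal{Q}$ of $\{1,\dots,D\}$, $\Pi_{\mathcal{Q}}\in\{0,1\}^{D\times|\mathcal{Q}|}$ has $(\Pi_{\mathcal{Q}})_{jT}=1$ iff $j\in T$; $\Pi^{\mathrm{Scaled}}_{\mathcal{Q}}\in\mathbb{R}^{|\mathcal{Q}|\times D}$ has entries $1/|T|$ if $j\in T$ and $0$ otherwise (row-normalized $\Pi_{\mathcal{Q}}^\top$); similarly for $\mathcal{P}$. *)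

theory Defs
  imports Complex_Main
begin

text \<open>Matrices are represented as functions from index pairs to reals; the row and
column index sets are given explicitly (finite types, or sets of colors).\<close>

definition is_partition :: "'a set set \<Rightarrow> 'a set \<Rightarrow> bool" where
  "is_partition P I \<longleftrightarrow> {} \<notin> P \<and> \<Union>P = I \<and>
     (\<forall>S\<in>P. \<forall>S'\<in>P. S \<noteq> S' \<longrightarrow> S \<inter> S' = {})"

definition equitable ::
  "'r set set \<Rightarrow> 'c set set \<Rightarrow> ('r \<Rightarrow> 'c \<Rightarrow> real) \<Rightarrow> bool" where
  "equitable P Q A \<longleftrightarrow> (\<forall>S\<in>P. \<forall>T\<in>Q.
      (\<forall>i\<in>S. \<forall>i'\<in>S. (\<Sum>j\<in>T. A i j) = (\<Sum>j\<in>T. A i' j)) \<and>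
      (\<forall>j\<in>T. \<forall>j'\<in>T. (\<Sum>i\<in>S. A i j) = (\<Sum>i\<in>S. A i j')))"

text \<open>Indicator matrix Pi_Q (rows: elements, columns: colors) and the scaled
matrix Pi_Q^Scaled (rows: colors, columns: elements).\<close>

definition Pi_mat :: "'a set set \<Rightarrow> 'a \<Rightarrow> 'a set \<Rightarrow> real" where
  "Pi_mat Q j T = (if j \<in> T then 1 else 0)"

definition Pi_scaled :: "'a set set \<Rightarrow> 'a set \<Rightarrow> 'a \<Rightarrow> real" where
  "Pi_scaled Q T j = (if j \<in> T then 1 / real (card T) else 0)"

definition is_inverse_on :: "'a set \<Rightarrow> ('a \<Rightarrow> 'a \<Rightarrow> real) \<Rightarrow> ('a \<Rightarrow> 'a \<Rightarrow> real) \<Rightarrow> bool" where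
  "is_inverse_on I A M \<longleftrightarrow>
     (\<forall>i\<in>I. \<forall>k\<in>I. (\<Sum>j\<in>I. M i j * A j k) = (if i = k then 1 else 0)) \<and>
     (\<forall>i\<in>I. \<forall>k\<in>I. (\<Sum>j\<in>I. A i j * M j k) = (if i = k then 1 else 0))"

definition invertible_on :: "'a set \<Rightarrow> ('a \<Rightarrow> 'a \<Rightarrow> real) \<Rightarrow> bool" where
  "invertible_on I A \<longleftrightarrow> (\<exists>M. is_inverse_on I A M)"

definition inv_on :: "'a set \<Rightarrow> ('a \<Rightarrow> 'a \<Rightarrow> real) \<Rightarrow> ('a \<Rightarrow> 'a \<Rightarrow> real)" where
  "inv_on I A = (SOME M. is_inverse_on I A M)"

end

theory Submission
  imports Defs
begin

lemma part_sum:
  assumes "is_partition P (UNIV::'a::finite set)"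
  shows "sum f (UNIV::'a set) = (\<Sum>S\<in>P. sum f S)"
proof -
  have "UNIV = \<Union>P" using assms unfolding is_partition_def by auto
  then have "sum f (UNIV::'a set) = sum f (\<Union>P)" by simp
  also have "\<dots> = (\<Sum>S\<in>P. sum f S)"
    using assms unfolding is_partition_def
    by (subst sum.Union_disjoint) auto
  finally show ?thesis .
qed

lemma part_finite:
  assumes "is_partition P (UNIV::'a::finite set)"
  shows "finite P"
proof -
  show ?thesis by (rule finite_subset[of P "Pow UNIV"]) auto
qed

lemma part_card:
  assumes "is_partition P (UNIV::'a::finite set)" "S \<in> P"
  shows "card S > 0"
  using assms unfolding is_partition_def by (auto simp: card_gt_0_iff)

lemma part_unique:
  assumes "is_partition P I" "S \<in> P" "S' \<in> P" "i \<in> S" "i \<in> S'"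
  shows "S = S'"
  using assms unfolding is_partition_def by blast

lemma part_ex:
  assumes "is_partition P (UNIV::'a set)"
  shows "\<exists>S\<in>P. (i::'a) \<in> S"
  using assms unfolding is_partition_def by blast

lemma part_pick:
  assumes "is_partition P (UNIV::'a::finite set)" "S \<in> P" "i \<in> S"
  shows "(\<Sum>T\<in>P. (if i \<in> T then 1 else 0) * g T) = (g S :: real)"
proof -
  have "(\<Sum>T\<in>P. (if i \<in> T then 1 else 0) * g T) = (\<Sum>T\<in>P. if T = S then g T else 0)"
  proof (rule sum.cong)
    fix T assume T: "T \<in> P"
    show "(if i \<in> T then 1 else 0) * g T = (if T = S then g T else 0)"
    proof (cases "i \<in> T")
      case True
      have "T = S" by (rule part_unique[OF assms(1) T assms(2) True assms(3)])
      then show ?thesis using True by simp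
    next
      case False
      then have "T \<noteq> S" using assms(3) by blast
      then show ?thesis using False by simp
    qed
  qed simp
  also have "\<dots> = g S" using assms part_finite[OF assms(1)] by simp
  finally show ?thesis .
qed

lemma sum_ind:
  "(\<Sum>j\<in>(UNIV::'a::finite set). f j * (if j \<in> T then 1 else 0)) = (\<Sum>j\<in>T. (f j::real))"
proof -
  have "(\<Sum>j\<in>(UNIV::'a::finite set). f j * (if j \<in> T then 1 else 0)) = (\<Sum>j\<in>UNIV. if j \<in> T then f j else 0)"
    by (rule sum.cong) auto
  also have "\<dots> = sum f (UNIV \<inter> T)" using sum.inter_restrict[of UNIV f T] by simp
  finally show ?thesis by simp
qed

lemma sum_ind2:
  "(\<Sum>j\<in>(UNIV::'a::finite set). (if j \<in> T then 1 else 0) * f j) = (\<Sum>j\<in>T. (f j::real))"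
  using sum_ind[of f T] by (simp add: mult.commute)

lemma delta1:
  assumes "finite A" "a \<in> A"
  shows "(\<Sum>x\<in>A. (if a = x then 1 else 0) * f x) = (f a::real)"
proof -
  have "(\<Sum>x\<in>A. (if a = x then 1 else 0) * f x) = (\<Sum>x\<in>A. if a = x then f a else 0)"
    by (rule sum.cong) auto
  also have "\<dots> = f a" using assms by simp
  finally show ?thesis .
qed

theorem mainTheorem7:
  fixes X :: "'n::finite \<Rightarrow> 'd::finite \<Rightarrow> real"
    and y :: "'n \<Rightarrow> real"
    and P :: "'n set set" and Q :: "'d set set"
    and X' :: "'n set \<Rightarrow> 'd set \<Rightarrow> real"
    and y' :: "'n set \<Rightarrow> real"
    and W' :: "'n set \<Rightarrow> 'n set \<Rightarrow> real"
    and w' :: "'d set \<Rightarrow> real"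
  assumes XtX_inv: "invertible_on UNIV (\<lambda>j k. \<Sum>i\<in>UNIV. X i j * X i k)"
    and P_part: "is_partition P UNIV"
    and Q_part: "is_partition Q UNIV"
    and equit: "equitable P Q X"
    and Xty_const: "\<forall>T\<in>Q. \<forall>j1\<in>T. \<forall>j2\<in>T.
                     (\<Sum>i\<in>UNIV. X i j1 * y i) = (\<Sum>i\<in>UNIV. X i j2 * y i)"
    and X'_def: "X' = (\<lambda>S T. \<Sum>i\<in>UNIV. \<Sum>j\<in>UNIV. Pi_scaled P S i * X i j * Pi_mat Q j T)"
    and y'_def: "y' = (\<lambda>S. \<Sum>i\<in>UNIV. Pi_scaled P S i * y i)"
    and W'_def: "W' = (\<lambda>S S'. \<Sum>i\<in>UNIV. Pi_mat P i S * Pi_mat P i S')"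
    and A'_inv: "invertible_on Q (\<lambda>T T'. \<Sum>S\<in>P. \<Sum>S'\<in>P. X' S T * W' S S' * X' S' T')"
    and w'_def: "w' = (\<lambda>T. \<Sum>T'\<in>Q.
                   inv_on Q (\<lambda>T T'. \<Sum>S\<in>P. \<Sum>S'\<in>P. X' S T * W' S S' * X' S' T') T T' *
                   (\<Sum>S\<in>P. \<Sum>S'\<in>P. X' S T' * W' S S' * y' S'))"
  shows "\<forall>j. (\<Sum>T\<in>Q. Pi_mat Q j T * w' T) =
             (\<Sum>k\<in>UNIV. inv_on UNIV (\<lambda>j k. \<Sum>i\<in>UNIV. X i j * X i k) j k *
                         (\<Sum>i\<in>UNIV. X i k * y i))"
proof -
  have finP: "finite P" by (rule part_finite[OF P_part])
  have finQ: "finite Q" by (rule part_finite[OF Q_part])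
  have cP: "\<And>S. S \<in> P \<Longrightarrow> card S > 0" by (rule part_card[OF P_part])
  have cQ: "\<And>T. T \<in> Q \<Longrightarrow> card T > 0" by (rule part_card[OF Q_part])
  define G where "G = (\<lambda>j k. \<Sum>i\<in>UNIV. X i j * X i k)"
  define M where "M = inv_on UNIV G"
  have M: "is_inverse_on UNIV G M"
    using XtX_inv unfolding M_def inv_on_def invertible_on_def G_def by (rule someI_ex)
  define A where "A = (\<lambda>T T'. \<Sum>S\<in>P. \<Sum>S'\<in>P. X' S T * W' S S' * X' S' T')"
  define MA where "MA = inv_on Q A"
  have MA: "is_inverse_on Q A MA"
    using A'_inv unfolding MA_def inv_on_def invertible_on_def A_def by (rule someI_ex)
  define b where "b = (\<lambda>T'. \<Sum>S\<in>P. \<Sum>S'\<in>P. X' S T' * W' S S' * y' S')"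
  have w'_eq: "w' = (\<lambda>T. \<Sum>T'\<in>Q. MA T T' * b T')"
    unfolding w'_def MA_def A_def b_def ..
  define Xty where "Xty = (\<lambda>k. \<Sum>i\<in>UNIV. X i k * y i)"
  define ws where "ws = (\<lambda>l. \<Sum>T\<in>Q. Pi_mat Q l T * w' T)"

  have F1: "X' S T = (\<Sum>i\<in>S. \<Sum>j\<in>T. X i j) / card S" if "S \<in> P" for S T
  proof -
    have "X' S T = (\<Sum>i\<in>UNIV. Pi_scaled P S i * (\<Sum>j\<in>UNIV. X i j * Pi_mat Q j T))"
      unfolding X'_def by (simp add: sum_distrib_left mult.assoc)
    also have "\<dots> = (\<Sum>i\<in>UNIV. Pi_scaled P S i * (\<Sum>j\<in>T. X i j))"
      unfolding Pi_mat_def by (simp add: sum_ind)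
    also have "\<dots> = (\<Sum>i\<in>UNIV. (if i \<in> S then 1 else 0) * ((\<Sum>j\<in>T. X i j) / card S))"
      unfolding Pi_scaled_def by (rule sum.cong) auto
    also have "\<dots> = (\<Sum>i\<in>S. (\<Sum>j\<in>T. X i j) / card S)" by (rule sum_ind2)
    finally show ?thesis by (simp add: sum_divide_distrib)
  qed
  have F2: "(\<Sum>j\<in>T. X i j) = X' S T" if "S \<in> P" "T \<in> Q" "i \<in> S" for S T i
  proof -
    have "\<forall>i'\<in>S. (\<Sum>j\<in>T. X i' j) = (\<Sum>j\<in>T. X i j)"
      using equit that unfolding equitable_def by blast
    then have "(\<Sum>i'\<in>S. \<Sum>j\<in>T. X i' j) = card S * (\<Sum>j\<in>T. X i j)" by simp
    moreover have "real (card S) \<noteq> 0" using cP[OF that(1)] by linarith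
    ultimately show ?thesis using F1[OF that(1), of T] by simp
  qed
  have F3: "(\<Sum>i\<in>S. X i j) = card S * X' S T / card T" if "S \<in> P" "T \<in> Q" "j \<in> T" for S T j
  proof -
    have "\<forall>j'\<in>T. (\<Sum>i\<in>S. X i j') = (\<Sum>i\<in>S. X i j)"
      using equit that unfolding equitable_def by blast
    then have "(\<Sum>j'\<in>T. \<Sum>i\<in>S. X i j') = card T * (\<Sum>i\<in>S. X i j)" by simp
    moreover have "(\<Sum>j'\<in>T. \<Sum>i\<in>S. X i j') = (\<Sum>i\<in>S. \<Sum>j'\<in>T. X i j')" by (rule sum.swap)
    moreover have "real (card S) \<noteq> 0" using cP[OF that(1)] by linarith
    moreover have "real (card T) \<noteq> 0" using cQ[OF that(2)] by linarith
    ultimately show ?thesis using F1[OF that(1), of T]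
      by (simp add: field_simps)
  qed
  have F4: "W' S S' = (if S = S' then card S else 0)" if "S \<in> P" "S' \<in> P" for S S'
  proof (cases "S = S'")
    case True
    have "W' S S' = (\<Sum>i\<in>UNIV. (if i \<in> S then 1 else 0) * (1::real))"
      unfolding W'_def Pi_mat_def True by (rule sum.cong) auto
    also have "\<dots> = card S" by (subst sum_ind2) simp
    finally show ?thesis using True by simp
  next
    case False
    have dj: "S \<inter> S' = {}" using P_part False that unfolding is_partition_def by blast
    have "W' S S' = (\<Sum>i\<in>(UNIV::'n set). (0::real))"
      unfolding W'_def Pi_mat_def by (rule sum.cong) (use dj in auto)
    then show ?thesis using False by simp
  qed
  have F5: "y' S = (\<Sum>i\<in>S. y i) / card S" if "S \<in> P" for S
  proof -
    have "y' S = (\<Sum>i\<in>UNIV. (if i \<in> S then 1 else 0) * (y i / card S))"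
      unfolding y'_def Pi_scaled_def by (rule sum.cong) auto
    also have "\<dots> = (\<Sum>i\<in>S. y i / card S)" by (rule sum_ind2)
    finally show ?thesis by (simp add: sum_divide_distrib)
  qed
  have Wsum: "(\<Sum>S'\<in>P. W' S S' * g S') = card S * g S" if "S \<in> P" for S and g :: "'n set \<Rightarrow> real"
  proof -
    have "(\<Sum>S'\<in>P. W' S S' * g S') = (\<Sum>S'\<in>P. if S = S' then card S * g S' else 0)"
      by (rule sum.cong) (auto simp: F4 that)
    also have "\<dots> = card S * g S" using finP that by simp
    finally show ?thesis .
  qed
  have F6: "A T T' = (\<Sum>S\<in>P. card S * X' S T * X' S T')" for T T'
    unfolding A_def
  proof (rule sum.cong)
    fix S assume S: "S \<in> P"
    have "(\<Sum>S'\<in>P. X' S T * W' S S' * X' S' T') = X' S T * (\<Sum>S'\<in>P. W' S S' * X' S' T')"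
      by (simp add: sum_distrib_left mult.assoc)
    also have "\<dots> = card S * X' S T * X' S T'" using Wsum[OF S] by simp
    finally show "(\<Sum>S'\<in>P. X' S T * W' S S' * X' S' T') = card S * X' S T * X' S T'" .
  qed simp
  have F7: "b T = (\<Sum>S\<in>P. X' S T * (\<Sum>i\<in>S. y i))" for T
    unfolding b_def
  proof (rule sum.cong)
    fix S assume S: "S \<in> P"
    have "(\<Sum>S'\<in>P. X' S T * W' S S' * y' S') = X' S T * (\<Sum>S'\<in>P. W' S S' * y' S')"
      by (simp add: sum_distrib_left mult.assoc)
    also have "\<dots> = X' S T * (card S * y' S)" using Wsum[OF S] by simp
    also have "\<dots> = X' S T * (\<Sum>i\<in>S. y i)" using F5[OF S] cP[OF S] by simp
    finally show "(\<Sum>S'\<in>P. X' S T * W' S S' * y' S') = X' S T * (\<Sum>i\<in>S. y i)" .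
  qed simp
  have F8: "(\<Sum>T'\<in>Q. A T T' * w' T') = b T" if "T \<in> Q" for T
  proof -
    have "(\<Sum>T'\<in>Q. A T T' * w' T') = (\<Sum>T'\<in>Q. \<Sum>T''\<in>Q. A T T' * MA T' T'' * b T'')"
      unfolding w'_eq by (simp add: sum_distrib_left mult.assoc)
    also have "\<dots> = (\<Sum>T''\<in>Q. (\<Sum>T'\<in>Q. A T T' * MA T' T'') * b T'')"
      by (subst sum.swap) (simp add: sum_distrib_right)
    also have "\<dots> = (\<Sum>T''\<in>Q. (if T = T'' then 1 else 0) * b T'')"
      using MA that unfolding is_inverse_on_def by (intro sum.cong) auto
    also have "\<dots> = b T" by (rule delta1[OF finQ that])
    finally show ?thesis .
  qed
  have F9: "ws l = w' T0" if "T0 \<in> Q" "l \<in> T0" for l T0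
    unfolding ws_def Pi_mat_def by (rule part_pick[OF Q_part that])
  have F10: "(\<Sum>l\<in>UNIV. X i l * ws l) = (\<Sum>T\<in>Q. X' S T * w' T)" if "S \<in> P" "i \<in> S" for i S
  proof -
    have "(\<Sum>l\<in>UNIV. X i l * ws l) = (\<Sum>T\<in>Q. \<Sum>l\<in>T. X i l * ws l)"
      by (rule part_sum[OF Q_part])
    also have "\<dots> = (\<Sum>T\<in>Q. \<Sum>l\<in>T. X i l * w' T)"
      by (intro sum.cong refl) (simp add: F9)
    also have "\<dots> = (\<Sum>T\<in>Q. X' S T * w' T)"
      by (intro sum.cong refl) (simp add: sum_distrib_right[symmetric] F2 that)
    finally show ?thesis .
  qed
  define v where "v = (\<lambda>S. \<Sum>T\<in>Q. X' S T * w' T)"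
  have F11: "(\<Sum>l\<in>UNIV. G k l * ws l) = b Tk / card Tk" if "Tk \<in> Q" "k \<in> Tk" for k Tk
  proof -
    have "(\<Sum>l\<in>UNIV. G k l * ws l) = (\<Sum>i\<in>UNIV. X i k * (\<Sum>l\<in>UNIV. X i l * ws l))"
    proof -
      have "(\<Sum>l\<in>UNIV. G k l * ws l) = (\<Sum>l\<in>UNIV. \<Sum>i\<in>UNIV. X i k * X i l * ws l)"
        unfolding G_def by (simp add: sum_distrib_right)
      also have "\<dots> = (\<Sum>i\<in>UNIV. \<Sum>l\<in>UNIV. X i k * X i l * ws l)"
        by (rule sum.swap)
      also have "\<dots> = (\<Sum>i\<in>UNIV. X i k * (\<Sum>l\<in>UNIV. X i l * ws l))"
        by (simp add: sum_distrib_left mult.assoc)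
      finally show ?thesis .
    qed
    also have "\<dots> = (\<Sum>S\<in>P. \<Sum>i\<in>S. X i k * (\<Sum>l\<in>UNIV. X i l * ws l))"
      by (rule part_sum[OF P_part])
    also have "\<dots> = (\<Sum>S\<in>P. \<Sum>i\<in>S. X i k * v S)"
      by (intro sum.cong refl) (simp add: F10 v_def)
    also have "\<dots> = (\<Sum>S\<in>P. (card S * X' S Tk / card Tk) * v S)"
      by (intro sum.cong refl) (simp add: sum_distrib_right[symmetric] F3[OF _ that])
    also have "\<dots> = (\<Sum>S\<in>P. card S * X' S Tk * v S) / card Tk"
      by (simp add: sum_divide_distrib)
    also have "(\<Sum>S\<in>P. card S * X' S Tk * v S) = (\<Sum>T'\<in>Q. A Tk T' * w' T')"
      unfolding F6 v_def
      by (simp add: sum_distrib_left sum_distrib_right mult.assoc sum.swap[of _ Q P])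
    also have "\<dots> = b Tk" by (rule F8[OF that(1)])
    finally show ?thesis .
  qed
  have F12: "Xty k = b Tk / card Tk" if "Tk \<in> Q" "k \<in> Tk" for k Tk
  proof -
    have "\<forall>l\<in>Tk. Xty l = Xty k" using Xty_const that unfolding Xty_def by blast
    then have "(\<Sum>l\<in>Tk. Xty l) = card Tk * Xty k" by simp
    moreover have "(\<Sum>l\<in>Tk. Xty l) = (\<Sum>i\<in>UNIV. y i * (\<Sum>l\<in>Tk. X i l))"
      unfolding Xty_def by (simp add: sum_distrib_left mult.commute sum.swap[of _ Tk UNIV])
    moreover have "\<dots> = (\<Sum>S\<in>P. \<Sum>i\<in>S. y i * (\<Sum>l\<in>Tk. X i l))"
      by (rule part_sum[OF P_part])
    moreover have "\<dots> = (\<Sum>S\<in>P. \<Sum>i\<in>S. y i * X' S Tk)"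
      by (intro sum.cong refl) (simp add: F2 that)
    moreover have "\<dots> = b Tk"
      unfolding F7 by (simp add: sum_distrib_left sum_distrib_right mult.commute)
    moreover have "real (card Tk) \<noteq> 0" using cQ[OF that(1)] by linarith
    ultimately show ?thesis by (simp add: field_simps)
  qed
  have F13: "(\<Sum>l\<in>UNIV. G k l * ws l) = Xty k" for k
  proof -
    obtain Tk where "Tk \<in> Q" "k \<in> Tk" using part_ex[OF Q_part] by blast
    then show ?thesis using F11 F12 by simp
  qed
  show ?thesis
  proof
    fix j
    have "(\<Sum>k\<in>UNIV. M j k * Xty k) = (\<Sum>k\<in>UNIV. \<Sum>l\<in>UNIV. M j k * G k l * ws l)"
      by (simp add: F13[symmetric] sum_distrib_left mult.assoc)
    also have "\<dots> = (\<Sum>l\<in>UNIV. (\<Sum>k\<in>UNIV. M j k * G k l) * ws l)"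
      by (subst sum.swap) (simp add: sum_distrib_right)
    also have "\<dots> = (\<Sum>l\<in>UNIV. (if j = l then 1 else 0) * ws l)"
      using M unfolding is_inverse_on_def by (intro sum.cong) auto
    also have "\<dots> = ws j" by (rule delta1) auto
    finally show "(\<Sum>T\<in>Q. Pi_mat Q j T * w' T) =
             (\<Sum>k\<in>UNIV. inv_on UNIV (\<lambda>j k. \<Sum>i\<in>UNIV. X i j * X i k) j k *
                         (\<Sum>i\<in>UNIV. X i k * y i))"
      unfolding ws_def M_def G_def Xty_def by simp
  qed
qed

end
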